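(* Let $p$ be a prime, and let $K=\{k_1<k_2<\cdots<k_r\}$ and $L=\{l_1,\ldots,l_s\}$ be disjoint subsets of $\{0,1,\ldots,p-1\}$. Let $\mathcal{A}$ be a family of distinct subsets of $[n]$ with $|A|\pmod p\in K$ for all $A\in\mathcal{A}$ and $|A\cap B|\pmod p\in L$ for all distinct $A,B\in\mathcal{A}$. Suppose that $s+k_r\le n\le 2s-2r$ and $p+k_1-1\le (s-2r+1)+k_r$. Then \[ |\mathcal{A}|\le r\binom{n}{s}\le \binom{n}{s}+\binom{n}{s-2}+\cdots+\binom{n}{s-2r+2}=\binom{n-1}{s}+\binom{n-1}{s-1}+\cdots+\binom{n-1}{s-2r+1}. \] *)

theory Defs
  imports "HOL-Computational_Algebra.Primes"
begin

end

theory Submission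
  imports Defs "HOL.Binomial_Plus"
begin

lemma supersets_count:
  assumes "finite X" "S \<subseteq> X" "card S = a" "a \<le> b"
  shows "card {T. T \<subseteq> X \<and> card T = b \<and> S \<subseteq> T} = (card X - a) choose (b - a)"
proof -
  have fS: "finite S" using assms finite_subset by blast
  have eq: "{T. T \<subseteq> X \<and> card T = b \<and> S \<subseteq> T} = (\<lambda>R. R \<union> S) ` {R. R \<subseteq> X - S \<and> card R = b - a}"
  proof (intro equalityI subsetI)
    fix T assume "T \<in> {T. T \<subseteq> X \<and> card T = b \<and> S \<subseteq> T}"
    then have T: "T \<subseteq> X" "card T = b" "S \<subseteq> T" by auto
    have "card (T - S) = b - a" using T assms fS by (simp add: card_Diff_subset)
    moreover have "T = (T - S) \<union> S" using T by blast
    ultimately show "T \<in> (\<lambda>R. R \<union> S) ` {R. R \<subseteq> X - S \<and> card R = b - a}"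
      using T by blast
  next
    fix T assume "T \<in> (\<lambda>R. R \<union> S) ` {R. R \<subseteq> X - S \<and> card R = b - a}"
    then obtain R where R: "R \<subseteq> X - S" "card R = b - a" "T = R \<union> S" by auto
    have fR: "finite R" using R assms finite_subset by (metis finite_Diff)
    have "card T = b" using R fR fS assms by (subst R(3), subst card_Un_disjoint) auto
    then show "T \<in> {T. T \<subseteq> X \<and> card T = b \<and> S \<subseteq> T}" using R assms by auto
  qed
  have inj: "inj_on (\<lambda>R. R \<union> S) {R. R \<subseteq> X - S \<and> card R = b - a}"
    by (intro inj_onI) blast
  have "card {T. T \<subseteq> X \<and> card T = b \<and> S \<subseteq> T} = card {R. R \<subseteq> X - S \<and> card R = b - a}"
    using card_image[OF inj] eq by simp
  also have "\<dots> = card (X - S) choose (b - a)" using assms by (intro n_subsets) auto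
  also have "card (X - S) = card X - a" using assms fS by (simp add: card_Diff_subset)
  finally show ?thesis .
qed

lemma two_layer:
  assumes X: "finite X" "card X = n" and ab: "a \<le> b" "b \<le> n"
    and F: "\<And>S. S \<in> F \<Longrightarrow> S \<subseteq> X \<and> card S = a"
    and G: "\<And>T. T \<in> G \<Longrightarrow> T \<subseteq> X \<and> card T = b"
    and anti: "\<And>S T. S \<in> F \<Longrightarrow> T \<in> G \<Longrightarrow> \<not> S \<subseteq> T"
  shows "card F * (n choose b) + card G * (n choose a) \<le> (n choose a) * (n choose b)"
proof -
  define Lb where "Lb = {T. T \<subseteq> X \<and> card T = b}"
  define U where "U = {T \<in> Lb. \<exists>S\<in>F. S \<subseteq> T}"
  have fLb: "finite Lb" unfolding Lb_def using X by simp
  have cLb: "card Lb = n choose b" unfolding Lb_def using n_subsets[OF X(1)] X by simp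
  have fF: "finite F" using F X by (metis (no_types, lifting) Pow_iff finite_Pow_iff rev_finite_subset subsetI)
  have fU: "finite U" unfolding U_def using fLb by simp
  have GU: "G \<union> U \<subseteq> Lb" using G unfolding U_def Lb_def by auto
  have GUd: "G \<inter> U = {}" using anti unfolding U_def by auto
  have fG: "finite G" using fLb GU finite_subset by blast
  have "card G + card U = card (G \<union> U)" using card_Un_disjoint[OF fG fU GUd] by simp
  also have "\<dots> \<le> card Lb" by (rule card_mono[OF fLb GU])
  finally have "card G + card U \<le> n choose b" using cLb by simp
  have sw: "(\<Sum>S\<in>F. \<Sum>T\<in>U. (if S \<subseteq> T then 1 else 0::nat)) = (\<Sum>T\<in>U. \<Sum>S\<in>F. (if S \<subseteq> T then 1 else 0))"
    by (rule sum.swap)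
  have lhs: "(\<Sum>T\<in>U. (if S \<subseteq> T then 1 else 0::nat)) = (n - a) choose (b - a)" if "S \<in> F" for S
  proof -
    have "(\<Sum>T\<in>U. (if S \<subseteq> T then 1 else 0::nat)) = card {T\<in>U. S \<subseteq> T}"
      using fU by (simp add: sum.If_cases Int_def)
    also have "{T\<in>U. S \<subseteq> T} = {T. T \<subseteq> X \<and> card T = b \<and> S \<subseteq> T}"
      using that unfolding U_def Lb_def by auto
    also have "card \<dots> = (n - a) choose (b - a)"
      using supersets_count[OF X(1), of S a b] F[OF that] ab X by simp
    finally show ?thesis .
  qed
  have rhs: "(\<Sum>S\<in>F. (if S \<subseteq> T then 1 else 0::nat)) \<le> b choose a" if "T \<in> U" for T
  proof -
    have T: "T \<subseteq> X" "card T = b" using that unfolding U_def Lb_def by auto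
    have fT: "finite T" using T X finite_subset by blast
    have "(\<Sum>S\<in>F. (if S \<subseteq> T then 1 else 0::nat)) = card {S\<in>F. S \<subseteq> T}"
      using fF by (simp add: sum.If_cases Int_def)
    also have "\<dots> \<le> card {S. S \<subseteq> T \<and> card S = a}"
      using F by (intro card_mono) (auto simp: fT)
    also have "\<dots> = b choose a" using n_subsets[OF fT] T by simp
    finally show ?thesis .
  qed
  have "card F * ((n - a) choose (b - a)) \<le> card U * (b choose a)"
  proof -
    have "card F * ((n - a) choose (b - a)) = (\<Sum>S\<in>F. \<Sum>T\<in>U. (if S \<subseteq> T then 1 else 0::nat))"
      using lhs by simp
    also have "\<dots> = (\<Sum>T\<in>U. \<Sum>S\<in>F. (if S \<subseteq> T then 1 else 0))" by (rule sw)
    also have "\<dots> \<le> (\<Sum>T\<in>U. b choose a)" by (intro sum_mono rhs)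
    also have "\<dots> = card U * (b choose a)" by simp
    finally show ?thesis .
  qed
  then have "card F * ((n - a) choose (b - a)) * (n choose a) \<le> card U * (b choose a) * (n choose a)"
    by simp
  moreover have "(n choose b) * (b choose a) = (n choose a) * ((n - a) choose (b - a))"
    using choose_mult ab by blast
  ultimately have "card F * (n choose b) * (b choose a) \<le> card U * (n choose a) * (b choose a)"
    by (metis mult.assoc mult.commute)
  moreover have "b choose a > 0" using ab by simp
  ultimately have "card F * (n choose b) \<le> card U * (n choose a)" by simp
  then have "card F * (n choose b) + card G * (n choose a) \<le> (card U + card G) * (n choose a)"
    by (simp add: algebra_simps)
  also have "\<dots> \<le> (n choose b) * (n choose a)"
    using \<open>card G + card U \<le> n choose b\<close> by (simp add: add.commute)
  also have "\<dots> = (n choose a) * (n choose b)" by (rule mult.commute)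
  finally show ?thesis .
qed

lemma arith_aux:
  fixes f g \<alpha> \<beta> :: nat
  assumes "f*\<beta> + g*\<alpha> \<le> \<alpha>*\<beta>" "0 < \<alpha>" "0 < \<beta>"
  shows "f + g \<le> max \<alpha> \<beta>"
proof (cases "\<alpha> \<le> \<beta>")
  case True
  have "(f+g)*\<alpha> \<le> f*\<beta> + g*\<alpha>" using True by (simp add: algebra_simps)
  also have "\<dots> \<le> \<beta>*\<alpha>" using assms(1) by (simp add: mult.commute)
  finally have "f + g \<le> \<beta>" using assms(2) by simp
  then show ?thesis by simp
next
  case False
  have "(f+g)*\<beta> \<le> f*\<beta> + g*\<alpha>" using False by (simp add: algebra_simps)
  also have "\<dots> \<le> \<alpha>*\<beta>" using assms(1) by simp
  finally have "f + g \<le> \<alpha>" using assms(3) by simp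
  then show ?thesis by simp
qed

lemma pascal_sum:
  "2*r \<le> s \<Longrightarrow> 0 < n \<Longrightarrow> (\<Sum>i<r. n choose (s - 2*i)) = (\<Sum>j<2*r. (n-1) choose (s - j))"
proof (induction r)
  case 0
  then show ?case by simp
next
  case (Suc r)
  have IH: "(\<Sum>i<r. n choose (s - 2*i)) = (\<Sum>j<2*r. (n-1) choose (s - j))" using Suc by simp
  have "n choose (s - 2*r) = ((n-1) choose (s - 2*r - 1)) + ((n-1) choose (s - 2*r))"
    using Suc.prems choose_reduce_nat[of n "s - 2*r"] by simp
  moreover have "s - 2*r - 1 = s - Suc (2*r)" by simp
  ultimately have e: "n choose (s - 2*r) = ((n-1) choose (s - 2*r)) + ((n-1) choose (s - Suc (2*r)))" by simp
  have "2 * Suc r = Suc (Suc (2*r))" by simp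
  then show ?case using IH e by (simp only: sum.lessThan_Suc)
qed

lemma choose_le_s:
  fixes n s t :: nat
  assumes "n - s \<le> t" "t \<le> s" "s \<le> n" "n \<le> 2*s"
  shows "n choose s \<le> n choose t"
proof (cases "t \<ge> n div 2")
  case True
  then show ?thesis using binomial_antimono[of t s n] assms by simp
next
  case False
  then have "2*t \<le> n" by linarith
  then have "n choose (n - s) \<le> n choose t" using binomial_mono[of "n-s" t n] assms by simp
  moreover have "n choose s = n choose (n - s)" using binomial_symmetric[of s n] assms by simp
  ultimately show ?thesis by simp
qed

lemma choose_le_s2:
  fixes n s t :: nat
  assumes "t \<le> n - s \<or> (s \<le> t \<and> t \<le> n)" "s \<le> n" "n \<le> 2*s"
  shows "n choose t \<le> n choose s"
proof (cases "t \<le> n - s")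
  case True
  then have "n choose t \<le> n choose (n - s)" using binomial_mono[of t "n-s" n] assms by simp
  moreover have "n choose s = n choose (n - s)" using binomial_symmetric[of s n] assms by simp
  ultimately show ?thesis by simp
next
  case False
  then show ?thesis using binomial_antimono[of s t n] assms by auto
qed

theorem mainTheorem8:
  fixes p n :: nat and K L :: "nat set" and \<A> :: "nat set set"
  assumes "prime p"
    and "K \<subseteq> {0..<p}" and "L \<subseteq> {0..<p}" and "K \<inter> L = {}" and "K \<noteq> {}"
    and "\<A> \<subseteq> Pow {1..n}"
    and "\<And>A. A \<in> \<A> \<Longrightarrow> card A mod p \<in> K"
    and "\<And>A B. A \<in> \<A> \<Longrightarrow> B \<in> \<A> \<Longrightarrow> A \<noteq> B \<Longrightarrow> card (A \<inter> B) mod p \<in> L"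
    and "card L + Max K \<le> n"
    and "int n \<le> 2 * int (card L) - 2 * int (card K)"
    and "int p + int (Min K) - 1 \<le> (int (card L) - 2 * int (card K) + 1) + int (Max K)"
  shows "card \<A> \<le> card K * (n choose card L)
       \<and> card K * (n choose card L) \<le> (\<Sum>i<card K. n choose (card L - 2 * i))
       \<and> (\<Sum>i<card K. n choose (card L - 2 * i)) = (\<Sum>j<2 * card K. (n - 1) choose (card L - j))"
proof -
  define r where "r = card K"
  define s where "s = card L"
  have fK: "finite K" using assms(2) finite_subset by blast
  have fL: "finite L" using assms(3) finite_subset by blast
  have r1: "r \<ge> 1" using fK assms(5) unfolding r_def by (simp add: Suc_leI card_gt_0_iff)
  have "card (K \<union> L) \<le> card {0..<p}" using assms(2,3) by (intro card_mono) auto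
  then have rs: "r + s \<le> p" using card_Un_disjoint[OF fK fL assms(4)] unfolding r_def s_def by simp
  have ns2: "int n \<le> 2 * int s - 2 * int r" using assms(10) unfolding r_def s_def by simp
  have n2p: "n < 2*p" using ns2 rs r1 by linarith
  have p0: "p > 0" using rs r1 by simp
  have maxK: "\<And>k. k \<in> K \<Longrightarrow> k \<le> Max K" using fK by simp
  have sn: "s + Max K \<le> n" using assms(9) unfolding s_def by simp
  have n2s: "n \<le> 2*s" using ns2 by linarith
  have sr: "2*r \<le> s" using ns2 sn by linarith
  define Ak where "Ak k = {A\<in>\<A>. card A mod p = k}" for k
  have cardA_le: "card A \<le> n" if "A \<in> \<A>" for A
    using that assms(6) by (metis PowD card_atLeastAtMost card_mono diff_Suc_1 finite_atLeastAtMost subsetD)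
  have bound_k: "card (Ak k) \<le> n choose s" if kK: "k \<in> K" for k
  proof -
    have kp: "k < p" using kK assms(2) by auto
    have kn: "k \<le> n - s" using maxK[OF kK] sn by simp
    define F where "F = {A\<in>Ak k. card A = k}"
    define G where "G = {A\<in>Ak k. card A = k + p}"
    have split: "card A = k \<or> card A = k + p" if "A \<in> Ak k" for A
    proof -
      have m: "card A mod p = k" "A \<in> \<A>" using that unfolding Ak_def by auto
      have "card A < 2*p" using cardA_le[OF m(2)] n2p by simp
      then have "card A div p < 2" using p0 by (simp add: div_less_iff_less_mult mult.commute)
      then have "card A div p = 0 \<or> card A div p = 1" by linarith
      moreover have "card A div p * p + card A mod p = card A" by (rule div_mult_mod_eq)
      ultimately show ?thesis using m(1) by auto
    qed
    have AkFG: "Ak k = F \<union> G" unfolding F_def G_def using split by auto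
    have memX: "A \<subseteq> {1..n}" if "A \<in> Ak k" for A
      using that assms(6) unfolding Ak_def by auto
    have ck: "n choose k \<le> n choose s" using choose_le_s2[of k n s] kn sn n2s by simp
    have cF: "card F \<le> n choose k"
    proof -
      have "F \<subseteq> {S. S \<subseteq> {1..n} \<and> card S = k}" unfolding F_def using memX by auto
      then have "card F \<le> card {S. S \<subseteq> {1..n} \<and> card S = k}" by (intro card_mono) auto
      also have "\<dots> = n choose k" using n_subsets[of "{1..n}" k] by simp
      finally show ?thesis .
    qed
    show ?thesis
    proof (cases "k + p \<le> n")
      case False
      then have "G = {}" unfolding G_def Ak_def using cardA_le by fastforce
      then show ?thesis using AkFG cF ck by simp
    next
      case True
      have ckp: "n choose (k+p) \<le> n choose s" using choose_le_s2[of "k+p" n s] True rs sn n2s by simp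
      have "card F * (n choose (k+p)) + card G * (n choose k) \<le> (n choose k) * (n choose (k+p))"
      proof (rule two_layer[of "{1..n}" n k "k+p"])
        show "finite {1..n}" by simp
        show "card {1..n} = n" by simp
        show "k \<le> k + p" by simp
        show "k + p \<le> n" by fact
        show "S \<subseteq> {1..n} \<and> card S = k" if "S \<in> F" for S using that memX unfolding F_def by auto
        show "T \<subseteq> {1..n} \<and> card T = k + p" if "T \<in> G" for T using that memX unfolding G_def by auto
        show "\<not> S \<subseteq> T" if "S \<in> F" "T \<in> G" for S T
        proof
          assume st: "S \<subseteq> T"
          have S: "S \<in> \<A>" "card S = k" using that(1) unfolding F_def Ak_def by auto
          have T: "T \<in> \<A>" "card T = k + p" using that(2) unfolding G_def Ak_def by auto
          have "S \<noteq> T" using S T p0 by auto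
          then have "card (S \<inter> T) mod p \<in> L" using assms(8) S T by blast
          moreover have "S \<inter> T = S" using st by blast
          ultimately have "k \<in> L" using S kp by simp
          then show False using kK assms(4) by blast
        qed
      qed
      moreover have "n choose k > 0" "n choose (k+p) > 0" using True by auto
      ultimately have "card F + card G \<le> max (n choose k) (n choose (k+p))"
        by (intro arith_aux) auto
      moreover have "card (Ak k) \<le> card F + card G" using AkFG by (simp add: card_Un_le)
      ultimately show ?thesis using ck ckp by simp
    qed
  qed
  have "\<A> = (\<Union>k\<in>K. Ak k)" unfolding Ak_def using assms(7) by auto
  then have "card \<A> \<le> (\<Sum>k\<in>K. card (Ak k))" using card_UN_le[OF fK, of Ak] by simp
  also have "\<dots> \<le> (\<Sum>k\<in>K. n choose s)" by (intro sum_mono bound_k)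
  also have "\<dots> = r * (n choose s)" unfolding r_def by simp
  finally have P1: "card \<A> \<le> r * (n choose s)" .
  have "r * (n choose s) = (\<Sum>i<r. n choose s)" by simp
  also have "\<dots> \<le> (\<Sum>i<r. n choose (s - 2*i))"
  proof (intro sum_mono)
    fix i assume "i \<in> {..<r}"
    then have "i < r" by simp
    then show "n choose s \<le> n choose (s - 2*i)"
      using choose_le_s[of n s "s - 2*i"] ns2 sn n2s by linarith
  qed
  finally have P2: "r * (n choose s) \<le> (\<Sum>i<r. n choose (s - 2*i))" .
  have P3: "(\<Sum>i<r. n choose (s - 2*i)) = (\<Sum>j<2*r. (n-1) choose (s - j))"
    using pascal_sum[of r s n] sr r1 sn by simp
  show ?thesis using P1 P2 P3 unfolding r_def s_def by simp
qed

end
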